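(* Suppose that for some $k\ge1$, $\mathbb{E}_\theta Z^k<\infty$ where $Z\sim\theta$. Let $\pi_n$ be the unique stationary distribution of the gap process and let $\mathbb{E}_{\pi_n}$ denote expectation when $\mathbf{Y}(0)\sim\pi_n$. Then for every $i=1,\dots,n-1$ and every $t\ge0$, $\mathbb{E}_{\pi_n}[Y_i(t)^{k+1}]<\infty$.
   Context: Fix $n\ge 2$ and a probability law $\theta$ on $(0,\infty)$ with $\int z\,\theta(dz)=1$. The $n$-particle Stochastic Follow-the-Leader system $\mathbf{X}=(X_1,\dots,X_n)$ on $\mathbb{R}$, with $X_n(t)<\dots<X_1(t)$, evolves as a pure jump Markov process: the leader $X_1$ jumps forward at rate $1$ with i.i.d. jump sizes of law $\theta$; for $i\ge 2$, particle $X_i$ jumps at rate $X_{i-1}-X_i$ to a location chosen uniformly in $(X_i,X_{i-1})$. The gap process $\mathbf{Y}=(Y_1,\dots,Y_{n-1})$, $Y_i=X_i-X_{i+1}$, is a Markov process on $\mathbb{R}_+^{n-1}$ with generator $$\mathcal{L}_nf(\mathbf{y})=y_{n-1}\mathbb{E}_U[f(\mathbf{y}-y_{n-1}Ue_{n-1})-f(\mathbf{y})]+\sum_{i=1}^{n-2}y_i\mathbb{E}_U[f(\mathbf{y}+y_iU(e_{i+1}-e_i))-f(\mathbf{y})]+\mathbb{E}_\theta[f(\mathbf{y}+Ze_1)-f(\mathbf{y})],$$ $U\sim\mathrm{U}(0,1)$, and has a unique stationary distribution $\pi_n$. *)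

theory Defs
  imports "HOL-Probability.Probability"
begin

text \<open>Gap configurations \<open>y = (y_1,...,y_{n-1})\<close> are represented as functions
  \<open>nat \<Rightarrow> real\<close> on the index set \<open>{1..<n}\<close> (extensional, as in \<open>PiM\<close>).\<close>

definition gap_space :: "nat \<Rightarrow> (nat \<Rightarrow> real) measure" where
  "gap_space n = PiM {1..<n} (\<lambda>_. borel)"

text \<open>The generator \<open>L_n\<close> of the gap process; \<open>U\<close> uniform on (0,1), \<open>Z\<close> with law \<open>\<theta>\<close>.\<close>

definition sfl_gen ::
  "nat \<Rightarrow> real measure \<Rightarrow> ((nat \<Rightarrow> real) \<Rightarrow> real) \<Rightarrow> (nat \<Rightarrow> real) \<Rightarrow> real" where
  "sfl_gen n \<theta> f y =
     y (n - 1) * (LBINT u=0..1. f (y((n - 1) := y (n - 1) - y (n - 1) * u)) - f y)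
   + (\<Sum>i\<in>{1..n - 2}. y i * (LBINT u=0..1.
        f (y(i := y i - y i * u, Suc i := y (Suc i) + y i * u)) - f y))
   + (\<integral>z. f (y(1 := y 1 + z)) - f y \<partial>\<theta>)"

definition sfl_test_fun :: "nat \<Rightarrow> ((nat \<Rightarrow> real) \<Rightarrow> real) \<Rightarrow> bool" where
  "sfl_test_fun n f \<longleftrightarrow>
     f \<in> borel_measurable (gap_space n) \<and>
     (\<exists>B. \<forall>y. \<bar>f y\<bar> \<le> B) \<and>
     (\<exists>C. \<forall>y. (\<exists>i\<in>{1..<n}. \<bar>y i\<bar> > C) \<longrightarrow> f y = 0)"

definition sfl_stationary :: "nat \<Rightarrow> real measure \<Rightarrow> (nat \<Rightarrow> real) measure \<Rightarrow> bool" where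
  "sfl_stationary n \<theta> \<pi> \<longleftrightarrow>
     prob_space \<pi> \<and> sets \<pi> = sets (gap_space n) \<and>
     (AE y in \<pi>. \<forall>i\<in>{1..<n}. 0 \<le> y i) \<and>
     (\<forall>f. sfl_test_fun n f \<longrightarrow>
        integrable \<pi> (sfl_gen n \<theta> f) \<and> (\<integral>y. sfl_gen n \<theta> f y \<partial>\<pi>) = 0)"

end

theory Submission imports Defs begin

definition Ssum :: "nat \<Rightarrow> (nat \<Rightarrow> real) \<Rightarrow> real" where
  "Ssum n y = (\<Sum>j\<in>{1..<n}. y j)"
definition Psum :: "nat \<Rightarrow> (nat \<Rightarrow> real) \<Rightarrow> real" where
  "Psum i y = (\<Sum>j\<in>{1..i}. y j)"
definition nnq :: "nat \<Rightarrow> (nat \<Rightarrow> real) \<Rightarrow> bool" where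
  "nnq n y \<longleftrightarrow> (\<forall>j\<in>{1..<n}. 0 \<le> y j)"
definition Ft :: "nat \<Rightarrow> nat \<Rightarrow> (real \<Rightarrow> real) \<Rightarrow> real \<Rightarrow> (nat \<Rightarrow> real) \<Rightarrow> real" where
  "Ft n i h C y = (if nnq n y \<and> Ssum n y \<le> C then h (Psum i y) else 0)"

lemma sum_upd:
  fixes y :: "'a \<Rightarrow> real"
  shows "finite K \<Longrightarrow> (\<Sum>j\<in>K. (y(a:=v)) j) = (\<Sum>j\<in>K. y j) + (if a \<in> K then v - y a else 0)"
proof (cases "a \<in> K")
  case True
  assume fin: "finite K"
  have "(\<Sum>j\<in>K. (y(a:=v)) j) = (y(a:=v)) a + (\<Sum>j\<in>K-{a}. (y(a:=v)) j)"
    by (rule sum.remove[OF fin True])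
  then have "(\<Sum>j\<in>K. (y(a:=v)) j) = v + (\<Sum>j\<in>K-{a}. (y(a:=v)) j)" by simp
  also have "(\<Sum>j\<in>K-{a}. (y(a:=v)) j) = (\<Sum>j\<in>K-{a}. y j)"
    by (rule sum.cong) auto
  finally have 1: "(\<Sum>j\<in>K. (y(a:=v)) j) = v + (\<Sum>j\<in>K-{a}. y j)" .
  have "(\<Sum>j\<in>K. y j) = y a + (\<Sum>j\<in>K-{a}. y j)"
    by (rule sum.remove[OF fin True])
  with 1 show ?thesis using True by simp
next
  case False
  then show ?thesis by (auto intro!: sum.cong)
qed

lemma upd1:
  assumes "n \<ge> 2" "i \<in> {1..<n}" "nnq n y"
  shows "Ft n i h C (y(1 := y 1 + z)) =
     (if 0 \<le> y 1 + z \<and> Ssum n y + z \<le> C then h (Psum i y + z) else 0)"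
proof -
  have s: "Ssum n (y(1 := y 1 + z)) = Ssum n y + z"
    using assms unfolding Ssum_def by (simp only: sum_upd[OF finite_atLeastLessThan]) simp
  have p: "Psum i (y(1 := y 1 + z)) = Psum i y + z"
    using assms unfolding Psum_def by (simp only: sum_upd[OF finite_atLeastAtMost]) simp
  have q: "nnq n (y(1 := y 1 + z)) \<longleftrightarrow> 0 \<le> y 1 + z"
    using assms unfolding nnq_def by auto
  show ?thesis unfolding Ft_def s p q by simp
qed

lemma updj:
  assumes "n \<ge> 2" "i \<in> {1..<n}" "nnq n y" "j \<in> {1..n-2}" "0 \<le> u" "u \<le> 1"
  shows "Ft n i h C (y(j := y j - y j * u, Suc j := y (Suc j) + y j * u)) =
     (if Ssum n y \<le> C then h (Psum i y - (if j = i then y i * u else 0)) else 0)"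
proof -
  let ?y = "y(j := y j - y j * u, Suc j := y (Suc j) + y j * u)"
  have jn: "Suc j < n" "j < n" using assms by auto
  have s: "Ssum n ?y = Ssum n y"
    using assms jn unfolding Ssum_def by (simp only: sum_upd[OF finite_atLeastLessThan]) simp
  have p: "Psum i ?y = Psum i y - (if j = i then y i * u else 0)"
    using assms unfolding Psum_def by (simp only: sum_upd[OF finite_atLeastAtMost]) auto
  have yj: "0 \<le> y j" "0 \<le> y (Suc j)" using assms unfolding nnq_def by auto
  have "0 \<le> y j - y j * u" using yj assms
    by (metis diff_ge_0_iff_ge mult_left_le mult.commute)
  moreover have "0 \<le> y (Suc j) + y j * u" using yj assms by simp
  ultimately have q: "nnq n ?y" using assms unfolding nnq_def by auto
  show ?thesis unfolding Ft_def s p using q by simp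
qed

lemma updl:
  assumes "n \<ge> 2" "i \<in> {1..<n}" "nnq n y" "0 \<le> u" "u \<le> 1"
  shows "Ft n i h C (y(n - 1 := y (n - 1) - y (n - 1) * u)) =
     (if Ssum n y - y (n - 1) * u \<le> C then h (Psum i y - (if i = n - 1 then y (n - 1) * u else 0)) else 0)"
proof -
  let ?y = "y(n - 1 := y (n - 1) - y (n - 1) * u)"
  have jn: "1 \<le> n - 1" "n - 1 < n" using assms by auto
  have s: "Ssum n ?y = Ssum n y - y (n - 1) * u"
    using assms jn unfolding Ssum_def by (simp add: sum_upd fun_upd_other del: fun_upd_apply)
  have p: "Psum i ?y = Psum i y - (if i = n - 1 then y (n - 1) * u else 0)"
    using assms unfolding Psum_def by (simp only: sum_upd[OF finite_atLeastAtMost]) auto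
  have yj: "0 \<le> y (n - 1)" using assms unfolding nnq_def by auto
  have "0 \<le> y (n - 1) - y (n - 1) * u" using yj assms
    by (metis diff_ge_0_iff_ge mult_left_le mult.commute)
  then have q: "nnq n ?y" using assms unfolding nnq_def by auto
  show ?thesis unfolding Ft_def s p using q by simp
qed

lemma Ft_test:
  assumes "n \<ge> 2" "i \<in> {1..<n}" and hm: "h \<in> borel_measurable borel" and hb: "\<And>x. \<bar>h x\<bar> \<le> B"
  shows "sfl_test_fun n (Ft n i h C)"
  unfolding sfl_test_fun_def
proof (intro conjI)
  have [measurable]: "Measurable.pred (gap_space n) (nnq n)"
    unfolding nnq_def gap_space_def by measurable
  have [measurable]: "Ssum n \<in> borel_measurable (gap_space n)"
    unfolding Ssum_def gap_space_def by measurable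
  have [measurable]: "Psum i \<in> borel_measurable (gap_space n)"
    unfolding Psum_def gap_space_def using assms(2)
    by (intro borel_measurable_sum measurable_component_singleton) auto
  show "Ft n i h C \<in> borel_measurable (gap_space n)"
    unfolding Ft_def[abs_def] using hm by measurable
  show "\<exists>B. \<forall>y. \<bar>Ft n i h C y\<bar> \<le> B"
    by (rule exI[of _ "max B 0"]) (auto simp: Ft_def intro: order_trans[OF hb])
  show "\<exists>C'. \<forall>y. (\<exists>i\<in>{1..<n}. C' < \<bar>y i\<bar>) \<longrightarrow> Ft n i h C y = 0"
  proof (rule exI[of _ "\<bar>C\<bar>"], intro allI impI)
    fix y assume "\<exists>j\<in>{1..<n}. \<bar>C\<bar> < \<bar>y j\<bar>"
    then obtain j where j: "j \<in> {1..<n}" "\<bar>C\<bar> < \<bar>y j\<bar>" by blast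
    show "Ft n i h C y = 0"
    proof (cases "nnq n y")
      case True
      then have "\<forall>l\<in>{1..<n}. 0 \<le> y l" unfolding nnq_def by auto
      then have "y j \<le> Ssum n y" unfolding Ssum_def
        using j(1) by (intro member_le_sum) auto
      moreover have "0 \<le> y j" using True j unfolding nnq_def by auto
      ultimately have "C < Ssum n y" using j by auto
      then show ?thesis unfolding Ft_def by auto
    qed (auto simp: Ft_def)
  qed
qed


definition UU :: "real measure" where "UU = restrict_space lborel {0..1}"

lemma UU_prob: "prob_space UU"
  unfolding UU_def by (rule prob_space_restrict_space) auto

lemma space_UU: "space UU = {0..1}"
  unfolding UU_def by (simp add: space_restrict_space)

lemma lb_UU: "(LBINT u=0..1. f u) = integral\<^sup>L UU f"
proof -
  have "(LBINT u=ereal 0..ereal 1. f u) = (LBINT u:{0..1}. f u)"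
    by (rule interval_integral_Icc) simp
  also have "\<dots> = integral\<^sup>L UU f"
    unfolding UU_def set_lebesgue_integral_def
    by (subst integral_restrict_space) auto
  finally show ?thesis by (simp add: zero_ereal_def one_ereal_def)
qed

lemma meas_UU: "f \<in> borel_measurable borel \<Longrightarrow> f \<in> borel_measurable UU"
  unfolding UU_def by (rule measurable_restrict_space1) simp

lemma int_UU:
  fixes K :: real
  assumes "f \<in> borel_measurable borel" "\<And>u. u \<in> {0..1} \<Longrightarrow> \<bar>f u\<bar> \<le> K"
  shows "integrable UU f"
proof -
  interpret prob_space UU by (rule UU_prob)
  show ?thesis
    by (rule integrable_const_bound[where B=K])
       (use assms meas_UU in \<open>auto simp: space_UU\<close>)
qed

lemma UU_pow: "integral\<^sup>L UU (\<lambda>u. u ^ m) = 1 / (real m + 1)"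
proof -
  have "(LBINT u=ereal 0..ereal 1. u ^ m) = (1::real) ^ (m+1) / (real m + 1) - 0 ^ (m+1) / (real m + 1)"
  proof (rule interval_integral_FTC_finite[where F = "\<lambda>u. u ^ (m+1) / (real m + 1)"])
    show "continuous_on {min 0 1..max 0 1} (\<lambda>u::real. u ^ m)"
      by (intro continuous_intros)
    fix x :: real
    show "((\<lambda>u. u ^ (m+1) / (real m + 1)) has_vector_derivative x ^ m) (at x within {min 0 1..max 0 1})"
    proof -
      have d: "((\<lambda>u. u ^ (m+1) / (real m + 1)) has_real_derivative x ^ m) (at x)"
        using DERIV_cdivide[OF DERIV_pow[of "m+1" x], of "real m + 1"] by (simp add: add.commute)
      then show ?thesis
        using has_real_derivative_iff_has_vector_derivative has_field_derivative_at_within by blast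
    qed
  qed
  then show ?thesis by (simp add: lb_UU[symmetric] zero_ereal_def one_ereal_def)
qed

lemma gen_exact:
  assumes n2: "n \<ge> 2" and i: "i \<in> {1..<n}" and y: "nnq n y"
  shows "sfl_gen n \<theta> (Ft n i h C) y =
    y (n - 1) * integral\<^sup>L UU (\<lambda>u.
        (if Ssum n y - y (n - 1) * u \<le> C
         then h (Psum i y - (if i = n - 1 then y (n - 1) * u else 0)) else 0)
        - (if Ssum n y \<le> C then h (Psum i y) else 0))
    + (if i \<le> n - 2 \<and> Ssum n y \<le> C then y i * integral\<^sup>L UU (\<lambda>u. h (Psum i y - y i * u) - h (Psum i y)) else 0)
    + (\<integral>z. (if 0 \<le> y 1 + z \<and> Ssum n y + z \<le> C then h (Psum i y + z) else 0)
         - (if Ssum n y \<le> C then h (Psum i y) else 0) \<partial>\<theta>)"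
proof -
  let ?S = "Ssum n y" and ?P = "Psum i y"
  let ?F0 = "if ?S \<le> C then h ?P else 0"
  have F0: "Ft n i h C y = ?F0" using y by (simp add: Ft_def)
  have t1: "(LBINT u=0..1. Ft n i h C (y(n - 1 := y (n - 1) - y (n - 1) * u)) - Ft n i h C y)
      = integral\<^sup>L UU (\<lambda>u. (if ?S - y (n - 1) * u \<le> C
         then h (?P - (if i = n - 1 then y (n - 1) * u else 0)) else 0) - ?F0)"
    unfolding lb_UU F0
    by (rule Bochner_Integration.integral_cong[OF refl]) (use updl[OF n2 i y] in \<open>auto simp: space_UU\<close>)
  have t2: "y j * (LBINT u=0..1. Ft n i h C (y(j := y j - y j * u, Suc j := y (Suc j) + y j * u)) - Ft n i h C y)
      = (if j = i then (if ?S \<le> C then y i * integral\<^sup>L UU (\<lambda>u. h (?P - y i * u) - h ?P) else 0) else 0)"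
    if j: "j \<in> {1..n-2}" for j
  proof -
    have "(LBINT u=0..1. Ft n i h C (y(j := y j - y j * u, Suc j := y (Suc j) + y j * u)) - Ft n i h C y)
      = integral\<^sup>L UU (\<lambda>u. (if ?S \<le> C then h (?P - (if j = i then y i * u else 0)) else 0) - ?F0)"
      unfolding lb_UU F0
      by (rule Bochner_Integration.integral_cong[OF refl]) (auto simp: space_UU updj[OF n2 i y j])
    then show ?thesis by (cases "j = i"; cases "?S \<le> C") auto
  qed
  have t3: "(\<integral>z. Ft n i h C (y(1 := y 1 + z)) - Ft n i h C y \<partial>\<theta>) =
     (\<integral>z. (if 0 \<le> y 1 + z \<and> ?S + z \<le> C then h (?P + z) else 0) - ?F0 \<partial>\<theta>)"
    unfolding F0 upd1[OF n2 i y] ..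
  have "(\<Sum>j\<in>{1..n - 2}. y j * (LBINT u=0..1. Ft n i h C (y(j := y j - y j * u, Suc j := y (Suc j) + y j * u)) - Ft n i h C y))
     = (\<Sum>j\<in>{1..n - 2}. (if j = i then (if ?S \<le> C then y i * integral\<^sup>L UU (\<lambda>u. h (?P - y i * u) - h ?P) else 0) else 0))"
    by (rule sum.cong) (simp_all add: t2)
  also have "\<dots> = (if i \<le> n - 2 \<and> ?S \<le> C then y i * integral\<^sup>L UU (\<lambda>u. h (?P - y i * u) - h ?P) else 0)"
    using i by (simp add: sum.delta)
  finally have t2': "(\<Sum>j\<in>{1..n - 2}. y j * (LBINT u=0..1. Ft n i h C (y(j := y j - y j * u, Suc j := y (Suc j) + y j * u)) - Ft n i h C y))
     = (if i \<le> n - 2 \<and> ?S \<le> C then y i * integral\<^sup>L UU (\<lambda>u. h (?P - y i * u) - h ?P) else 0)" .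
  show ?thesis
    unfolding sfl_gen_def t1 t2' t3 by simp
qed


lemma meas_Ssum[measurable]: "Ssum n \<in> borel_measurable (gap_space n)"
  unfolding Ssum_def gap_space_def by measurable

lemma meas_nnq[measurable]: "Measurable.pred (gap_space n) (nnq n)"
  unfolding nnq_def gap_space_def by measurable

lemma meas_comp: "i \<in> {1..<n} \<Longrightarrow> (\<lambda>y. y i) \<in> borel_measurable (gap_space n)"
  unfolding gap_space_def by (rule measurable_component_singleton) auto

lemma meas_Psum: "i \<in> {1..<n} \<Longrightarrow> Psum i \<in> borel_measurable (gap_space n)"
  unfolding Psum_def gap_space_def
  by (intro borel_measurable_sum measurable_component_singleton) auto

lemma mvt_pow:
  fixes x w :: real
  assumes "0 \<le> x" "x \<le> w"
  shows "w ^ Suc m - x ^ Suc m \<le> real (Suc m) * w ^ m * (w - x)"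
proof (induction m)
  case 0 then show ?case by simp
next
  case (Suc m)
  have "w ^ Suc (Suc m) - x ^ Suc (Suc m) = w * (w ^ Suc m - x ^ Suc m) + (w - x) * x ^ Suc m"
    by (simp add: algebra_simps)
  also have "\<dots> \<le> w * (real (Suc m) * w ^ m * (w - x)) + (w - x) * w ^ Suc m"
    using assms Suc by (intro add_mono mult_left_mono mult_right_mono power_mono) auto
  also have "\<dots> = real (Suc (Suc m)) * w ^ Suc m * (w - x)"
    by (simp add: algebra_simps)
  finally show ?case .
qed

lemma super_pow:
  fixes x a :: real
  assumes "0 \<le> x" "0 \<le> a"
  shows "x ^ Suc m + a ^ Suc m \<le> (x + a) ^ Suc m"
proof (induction m)
  case 0 then show ?case by simp
next
  case (Suc m)
  have "x ^ Suc (Suc m) + a ^ Suc (Suc m) \<le> (x + a) * (x ^ Suc m + a ^ Suc m)"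
    using assms by (simp add: algebra_simps)
  also have "\<dots> \<le> (x + a) * (x + a) ^ Suc m"
    using assms Suc by (intro mult_left_mono) auto
  finally show ?case by simp
qed

lemma pow_split:
  fixes s z :: real
  assumes "0 \<le> s" "0 \<le> z"
  shows "(s + z) ^ p \<le> 2 ^ p * (s ^ p + z ^ p)"
proof -
  have "(s + z) ^ p \<le> (2 * max s z) ^ p"
    using assms by (intro power_mono) auto
  also have "\<dots> = 2 ^ p * max s z ^ p" by (simp add: power_mult_distrib)
  also have "max s z ^ p \<le> s ^ p + z ^ p"
    using assms by (auto simp: max_def)
  finally show ?thesis by simp
qed

definition hA :: "real \<Rightarrow> nat \<Rightarrow> real \<Rightarrow> real" where
  "hA A m x = (max 0 (min x A)) ^ m"

lemma hA_meas[measurable]: "hA A m \<in> borel_measurable borel"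
  unfolding hA_def[abs_def] by measurable

lemma hA_bounds: "0 \<le> A \<Longrightarrow> 0 \<le> hA A m x \<and> hA A m x \<le> A ^ m"
  unfolding hA_def by (auto intro!: power_mono)

lemma hA_mono: "x \<le> x' \<Longrightarrow> hA A m x \<le> hA A m x'"
  unfolding hA_def by (intro power_mono) auto

lemma hA_incr:
  assumes "0 \<le> s" "0 \<le> z" "0 \<le> A"
  shows "hA A (Suc p) (s + z) - hA A (Suc p) s \<le> real (Suc p) * (s + z) ^ p * z"
proof -
  let ?g = "\<lambda>t. max 0 (min t A)"
  have g1: "0 \<le> ?g s" "?g s \<le> ?g (s + z)" "?g (s+z) - ?g s \<le> z" "?g (s+z) \<le> s + z"
    using assms by auto
  have "hA A (Suc p) (s + z) - hA A (Suc p) s \<le> real (Suc p) * ?g (s+z) ^ p * (?g (s+z) - ?g s)"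
    unfolding hA_def by (rule mvt_pow) (use g1 in auto)
  also have "\<dots> \<le> real (Suc p) * (s + z) ^ p * z"
    using g1 by (intro mult_mono power_mono mult_left_mono) auto
  finally show ?thesis .
qed

lemma hA_on:
  "0 \<le> x \<Longrightarrow> x \<le> A \<Longrightarrow> hA A m x = x ^ m"
  unfolding hA_def by simp


lemma gen_diff_bound:
  assumes n2: "n \<ge> 2" and i: "i \<in> {1..<n}" and y: "nnq n y"
    and hm: "h \<in> borel_measurable borel" and hb: "\<And>x. 0 \<le> h x \<and> h x \<le> B"
    and thp: "prob_space \<theta>" and ths: "sets \<theta> = sets borel"
  shows "sfl_gen n \<theta> (Ft n i h C) y - B * sfl_gen n \<theta> (Ft n i (\<lambda>_. 1) C) y \<le>
    (\<integral>z. ((if 0 \<le> y 1 + z \<and> Ssum n y + z \<le> C then h (Psum i y + z) else 0)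
         - (if Ssum n y \<le> C then h (Psum i y) else 0))
      - B * ((if 0 \<le> y 1 + z \<and> Ssum n y + z \<le> C then 1 else 0)
         - (if Ssum n y \<le> C then 1 else 0)) \<partial>\<theta>)
    + (if Ssum n y \<le> C then y i * integral\<^sup>L UU (\<lambda>u. h (Psum i y - y i * u) - h (Psum i y)) else 0)"
proof -
  interpret th: prob_space \<theta> by (rule thp)
  interpret U: prob_space UU by (rule UU_prob)
  define S where "S = Ssum n y"
  define P where "P = Psum i y"
  define a where "a = y (n - 1)"
  have a0: "0 \<le> a" using y n2 unfolding nnq_def a_def by auto
  have B0: "0 \<le> B" using hb[of 0] by linarith
  have thmeas: "borel_measurable \<theta> = borel_measurable borel"
    by (rule measurable_cong_sets[OF ths refl])
  define Fl where "Fl u = (if S - a * u \<le> C then h (P - (if i = n - 1 then a * u else 0)) else 0) - (if S \<le> C then h P else 0)" for u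
  define X where "X u = (if i = n - 1 \<and> S \<le> C then h (P - a * u) - h P else 0)" for u
  define Y where "Y u = (if S - a * u \<le> C then 1 else 0) - (if S \<le> C then 1 else (0::real))" for u
  define gF where "gF z = (if 0 \<le> y 1 + z \<and> S + z \<le> C then h (P + z) else 0) - (if S \<le> C then h P else 0)" for z
  define gC where "gC z = (if 0 \<le> y 1 + z \<and> S + z \<le> C then 1 else 0) - (if S \<le> C then 1 else (0::real))" for z
  have eF: "sfl_gen n \<theta> (Ft n i h C) y = a * integral\<^sup>L UU Fl
     + (if i \<le> n - 2 \<and> S \<le> C then y i * integral\<^sup>L UU (\<lambda>u. h (P - y i * u) - h P) else 0)
     + integral\<^sup>L \<theta> gF"
    unfolding Fl_def gF_def S_def P_def a_def by (rule gen_exact[OF n2 i y])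
  have eC: "sfl_gen n \<theta> (Ft n i (\<lambda>_. 1) C) y = a * integral\<^sup>L UU Y + integral\<^sup>L \<theta> gC"
    using gen_exact[OF n2 i y, of \<theta> "\<lambda>_. 1" C] unfolding Y_def gC_def S_def P_def a_def by simp
  have hmeas[measurable]: "h \<in> borel_measurable borel" by (rule hm)
  have mFl: "Fl \<in> borel_measurable borel" unfolding Fl_def[abs_def] by measurable
  have mX: "X \<in> borel_measurable borel" unfolding X_def[abs_def] by measurable
  have mY: "Y \<in> borel_measurable borel" unfolding Y_def[abs_def] by measurable
  have bFl: "\<bar>Fl u\<bar> \<le> 2 * B" for u
    unfolding Fl_def using hb[of "P - (if i = n - 1 then a * u else 0)"] hb[of P] by auto
  have bX: "\<bar>X u\<bar> \<le> 2 * B" for u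
    unfolding X_def using hb[of "P - a * u"] hb[of P] by auto
  have iFl: "integrable UU Fl" by (rule int_UU[OF mFl bFl])
  have iX: "integrable UU X" by (rule int_UU[OF mX bX])
  have iY: "integrable UU Y"
    by (rule int_UU[OF mY, where K="1"]) (auto simp: Y_def)
  have ptw: "Fl u \<le> X u + B * Y u" if u: "u \<in> space UU" for u
  proof -
    have au: "0 \<le> a * u" using a0 u by (simp add: space_UU)
    show ?thesis
      unfolding Fl_def X_def Y_def using au hb[of "P - (if i = n - 1 then a * u else 0)"] hb[of P]
      by (cases "S \<le> C"; cases "S - a * u \<le> C"; cases "i = n - 1") auto
  qed
  have "integral\<^sup>L UU Fl \<le> integral\<^sup>L UU (\<lambda>u. X u + B * Y u)"
    by (rule integral_mono) (use iFl iX iY ptw in auto)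
  also have "\<dots> = integral\<^sup>L UU X + B * integral\<^sup>L UU Y"
    using iX iY by simp
  finally have IF: "a * integral\<^sup>L UU Fl \<le> a * integral\<^sup>L UU X + B * (a * integral\<^sup>L UU Y)"
    using a0 by (metis distrib_left mult.left_commute mult_left_mono)
  have IX: "a * integral\<^sup>L UU X
     + (if i \<le> n - 2 \<and> S \<le> C then y i * integral\<^sup>L UU (\<lambda>u. h (P - y i * u) - h P) else 0)
     = (if S \<le> C then y i * integral\<^sup>L UU (\<lambda>u. h (P - y i * u) - h P) else 0)"
  proof (cases "i = n - 1")
    case True
    then show ?thesis using n2 unfolding X_def a_def by (cases "S \<le> C") auto
  next
    case False
    then have "i \<le> n - 2" using i by auto
    then show ?thesis using False unfolding X_def by auto
  qed
  have bgF: "\<bar>gF z\<bar> \<le> 2 * B" for z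
    unfolding gF_def using hb[of "P + z"] hb[of P] by auto
  have bgC: "\<bar>gC z\<bar> \<le> 1" for z
    unfolding gC_def by auto
  have igF: "integrable \<theta> gF"
  proof (rule th.integrable_const_bound[where B="2*B"])
    show "AE x in \<theta>. norm (gF x) \<le> 2 * B" using bgF by simp
    show "gF \<in> borel_measurable \<theta>" unfolding thmeas gF_def[abs_def] by measurable
  qed
  have igC: "integrable \<theta> gC"
  proof (rule th.integrable_const_bound[where B="1"])
    show "AE x in \<theta>. norm (gC x) \<le> 1" using bgC by simp
    show "gC \<in> borel_measurable \<theta>" unfolding thmeas gC_def[abs_def] by measurable
  qed
  have IT: "integral\<^sup>L \<theta> gF - B * integral\<^sup>L \<theta> gC = (\<integral>z. gF z - B * gC z \<partial>\<theta>)"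
    using igF igC by simp
  have "sfl_gen n \<theta> (Ft n i h C) y - B * sfl_gen n \<theta> (Ft n i (\<lambda>_. 1) C) y
     \<le> (\<integral>z. gF z - B * gC z \<partial>\<theta>) + (if S \<le> C then y i * integral\<^sup>L UU (\<lambda>u. h (P - y i * u) - h P) else 0)"
    unfolding eF eC using IF IX IT by (simp add: algebra_simps)
  then show ?thesis unfolding gF_def gC_def S_def P_def .
qed


lemma nnq_facts:
  assumes "nnq n y" "i \<in> {1..<n}"
  shows "0 \<le> y i" "y i \<le> Psum i y" "0 \<le> Psum i y" "Psum i y \<le> Ssum n y" "0 \<le> Ssum n y"
proof -
  have nn: "\<And>j. j \<in> {1..<n} \<Longrightarrow> 0 \<le> y j" using assms unfolding nnq_def by auto
  have sub: "{1..i} \<subseteq> {1..<n}" using assms by auto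
  show "0 \<le> y i" using nn assms by auto
  show "y i \<le> Psum i y" unfolding Psum_def
    by (rule member_le_sum) (use assms nn sub in auto)
  show "0 \<le> Psum i y" unfolding Psum_def by (rule sum_nonneg) (use nn sub in auto)
  show "Psum i y \<le> Ssum n y" unfolding Psum_def Ssum_def
    by (rule sum_mono2) (use nn sub in auto)
  show "0 \<le> Ssum n y" unfolding Ssum_def by (rule sum_nonneg) (use nn in auto)
qed

lemma D_bound:
  assumes y: "nnq n y" and i: "i \<in> {1..<n}" and A: "0 \<le> A" "A \<le> C"
  shows "(if Ssum n y \<le> C then y i * integral\<^sup>L UU (\<lambda>u. hA A (Suc p) (Psum i y - y i * u) - hA A (Suc p) (Psum i y)) else 0)
    \<le> - (if Ssum n y \<le> A then y i ^ Suc (Suc p) / (real p + 2) else 0)"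
proof -
  interpret U: prob_space UU by (rule UU_prob)
  let ?h = "hA A (Suc p)"
  define S where "S = Ssum n y"
  define P where "P = Psum i y"
  define b where "b = y i"
  note f = nnq_facts[OF y i, folded S_def P_def b_def]
  have mG: "(\<lambda>u. ?h (P - b * u) - ?h P) \<in> borel_measurable borel" by measurable
  have iG: "integrable UU (\<lambda>u. ?h (P - b * u) - ?h P)"
    by (rule int_UU[OF mG, where K="2 * A ^ Suc p"])
       (use hA_bounds[OF A(1), of "Suc p"] in \<open>smt (verit)\<close>)
  show ?thesis
  proof (cases "S \<le> A")
    case True
    have pt: "?h (P - b * u) - ?h P \<le> - (b ^ Suc p * u ^ Suc p)" if u: "u \<in> space UU" for u
    proof -
      have u01: "0 \<le> u" "u \<le> 1" using u by (auto simp: space_UU)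
      have bu: "0 \<le> b * u" "b * u \<le> b" using f u01 by (auto intro: mult_left_le)
      have x0: "0 \<le> P - b * u" using bu f by linarith
      have "?h (P - b * u) = (P - b * u) ^ Suc p"
        by (rule hA_on) (use x0 f True bu in auto)
      moreover have "?h P = P ^ Suc p" by (rule hA_on) (use f True in auto)
      moreover have "(P - b * u) ^ Suc p + (b * u) ^ Suc p \<le> (P - b * u + b * u) ^ Suc p"
        by (rule super_pow) (use x0 bu in auto)
      ultimately show ?thesis by (simp only: power_mult_distrib) (simp add: algebra_simps)
    qed
    have iR: "integrable UU (\<lambda>u. - (b ^ Suc p * u ^ Suc p))"
      by (rule int_UU[where K="\<bar>b\<bar> ^ Suc p"]) (auto simp: abs_mult power_abs intro!: mult_left_le mult_le_one power_le_one)
    have "integral\<^sup>L UU (\<lambda>u. ?h (P - b * u) - ?h P) \<le> integral\<^sup>L UU (\<lambda>u. - (b ^ Suc p * u ^ Suc p))"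
      by (rule integral_mono) (use iG iR pt in auto)
    also have "\<dots> = - (b ^ Suc p / (real p + 2))"
      using UU_pow[of "Suc p"] by (simp add: add.commute)
    finally have "b * integral\<^sup>L UU (\<lambda>u. ?h (P - b * u) - ?h P) \<le> b * - (b ^ Suc p / (real p + 2))"
      using f by (intro mult_left_mono) auto
    then show ?thesis using True A unfolding S_def[symmetric] P_def[symmetric] b_def[symmetric] by simp
  next
    case False
    have pt: "?h (P - b * u) - ?h P \<le> 0" if u: "u \<in> space UU" for u
    proof -
      have "0 \<le> b * u" using f u by (auto simp: space_UU)
      then show ?thesis using hA_mono[of "P - b * u" P A "Suc p"] by simp
    qed
    have "integral\<^sup>L UU (\<lambda>u. ?h (P - b * u) - ?h P) \<le> integral\<^sup>L UU (\<lambda>u. 0)"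
      by (rule integral_mono) (use iG pt in auto)
    then have "b * integral\<^sup>L UU (\<lambda>u. ?h (P - b * u) - ?h P) \<le> 0"
      using f by (simp add: mult_nonneg_nonpos)
    then show ?thesis using False unfolding S_def[symmetric] P_def[symmetric] b_def[symmetric] by simp
  qed
qed


lemma theta_bound:
  assumes thp: "prob_space \<theta>" and ths: "sets \<theta> = sets borel" and pos: "AE z in \<theta>. 0 < z"
    and i1: "integrable \<theta> (\<lambda>z. z)" and e1: "(\<integral>z. z \<partial>\<theta>) = 1"
    and ip: "integrable \<theta> (\<lambda>z. z ^ Suc p)"
    and y: "nnq n y" and i: "i \<in> {1..<n}" and n2: "n \<ge> 2" and A: "0 \<le> A" and C: "0 \<le> C"
  shows "(\<integral>z. ((if 0 \<le> y 1 + z \<and> Ssum n y + z \<le> C then hA A (Suc p) (Psum i y + z) else 0)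
         - (if Ssum n y \<le> C then hA A (Suc p) (Psum i y) else 0))
      - A ^ Suc p * ((if 0 \<le> y 1 + z \<and> Ssum n y + z \<le> C then 1 else 0)
         - (if Ssum n y \<le> C then 1 else 0)) \<partial>\<theta>)
    \<le> real (Suc p) * 2 ^ p * (Ssum n y ^ p + (\<integral>z. z ^ Suc p \<partial>\<theta>))
      + A ^ Suc p * (if C / 2 < Ssum n y then 1 else 0) + A ^ Suc p * measure \<theta> {C/2<..}"
proof -
  interpret th: prob_space \<theta> by (rule thp)
  let ?h = "hA A (Suc p)"
  define B where "B = A ^ Suc p"
  define K where "K = real (Suc p) * 2 ^ p"
  define S where "S = Ssum n y"
  define P where "P = Psum i y"
  define c where "c = (if C / 2 < S then 1 else (0::real))"
  note f = nnq_facts[OF y i, folded S_def P_def]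
  have y1: "0 \<le> y 1" using y n2 unfolding nnq_def by auto
  have hb: "0 \<le> ?h x \<and> ?h x \<le> B" for x unfolding B_def by (rule hA_bounds[OF A])
  have B0: "0 \<le> B" unfolding B_def using A by simp
  have thmeas: "borel_measurable \<theta> = borel_measurable borel"
    by (rule measurable_cong_sets[OF ths refl])
  define G where "G z = ((if 0 \<le> y 1 + z \<and> S + z \<le> C then ?h (P + z) else 0)
         - (if S \<le> C then ?h P else 0))
      - B * ((if 0 \<le> y 1 + z \<and> S + z \<le> C then 1 else 0) - (if S \<le> C then 1 else 0))" for z
  define R where "R z = K * (S ^ p * z + z ^ Suc p) + B * c + B * indicator {C/2<..} z" for z
  have ptw: "G z \<le> R z" if z: "0 < z" for z
  proof -
    have yz: "0 \<le> y 1 + z" using y1 z by simp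
    have mono: "?h P \<le> ?h (P + z)" using z by (intro hA_mono) simp
    have s1: "G z \<le> (?h (P + z) - ?h P) + B * c + B * indicator {C/2<..} z"
    proof (cases "S + z \<le> C")
      case True
      then have "S \<le> C" using z by simp
      then show ?thesis using True yz B0 unfolding G_def c_def by (auto simp: indicator_def)
    next
      case False
      then have "C / 2 < S \<or> C / 2 < z" by auto
      then have "1 \<le> c + indicator {C/2<..} z" unfolding c_def by (auto simp: indicator_def)
      then have "B \<le> B * c + B * indicator {C/2<..} z" using B0
        by (metis distrib_left mult.right_neutral mult_left_mono)
      moreover have "0 \<le> c" "0 \<le> (indicator {C/2<..} z :: real)" unfolding c_def by auto
      ultimately show ?thesis using False yz hb[of P] hb[of "P+z"] mono B0 unfolding G_def
        by (cases "S \<le> C") (auto intro: add_nonneg_nonneg mult_nonneg_nonneg)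
    qed
    have "?h (P + z) - ?h P \<le> real (Suc p) * (P + z) ^ p * z"
      by (rule hA_incr) (use f z A in auto)
    also have "\<dots> \<le> real (Suc p) * (2 ^ p * (P ^ p + z ^ p)) * z"
      using pow_split[of P z p] f z by (intro mult_right_mono mult_left_mono) auto
    also have "\<dots> \<le> real (Suc p) * (2 ^ p * (S ^ p + z ^ p)) * z"
      using f z by (intro mult_right_mono mult_left_mono add_right_mono power_mono) auto
    also have "\<dots> = K * (S ^ p * z + z ^ Suc p)" unfolding K_def by (simp add: algebra_simps)
    finally show ?thesis using s1 unfolding R_def by simp
  qed
  have mG: "G \<in> borel_measurable \<theta>" unfolding thmeas G_def[abs_def] by measurable
  have bG: "\<bar>G z\<bar> \<le> 3 * B" for z
    unfolding G_def using hb[of "P + z"] hb[of P] B0 by (auto simp: abs_if)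
  have iG: "integrable \<theta> G"
    by (rule th.integrable_const_bound[where B="3*B"]) (use bG mG in auto)
  have iI: "integrable \<theta> (indicator {C/2<..} :: real \<Rightarrow> real)"
    by (rule th.integrable_const_bound[where B=1]) (auto simp: thmeas)
  have iR: "integrable \<theta> R" unfolding R_def using i1 ip iI by simp
  have "integral\<^sup>L \<theta> G \<le> integral\<^sup>L \<theta> R"
    by (rule integral_mono_AE[OF iG iR]) (use pos ptw in auto)
  also have "integral\<^sup>L \<theta> R = K * (S ^ p * 1 + (\<integral>z. z ^ Suc p \<partial>\<theta>)) + B * c + B * measure \<theta> {C/2<..}"
  proof -
    have m: "{C/2<..} \<in> sets \<theta>" using ths by simp
    have "integral\<^sup>L \<theta> R = K * (S ^ p * (\<integral>z. z \<partial>\<theta>) + (\<integral>z. z ^ Suc p \<partial>\<theta>)) + B * c + B * (\<integral>z. indicator {C/2<..} z \<partial>\<theta>)"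
      unfolding R_def using i1 ip iI th.prob_space by simp
    then show ?thesis using e1 m by simp
  qed
  finally show ?thesis unfolding G_def K_def B_def c_def S_def P_def by simp
qed


lemma final_ptw:
  assumes thp: "prob_space \<theta>" and ths: "sets \<theta> = sets borel" and pos: "AE z in \<theta>. 0 < z"
    and i1: "integrable \<theta> (\<lambda>z. z)" and e1: "(\<integral>z. z \<partial>\<theta>) = 1"
    and ip: "integrable \<theta> (\<lambda>z. z ^ Suc p)"
    and y: "nnq n y" and i: "i \<in> {1..<n}" and n2: "n \<ge> 2" and A: "0 \<le> A" "A \<le> C"
  shows "sfl_gen n \<theta> (Ft n i (hA A (Suc p)) C) y - A ^ Suc p * sfl_gen n \<theta> (Ft n i (\<lambda>_. 1) C) y
    \<le> real (Suc p) * 2 ^ p * (Ssum n y ^ p + (\<integral>z. z ^ Suc p \<partial>\<theta>))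
      + A ^ Suc p * (if C / 2 < Ssum n y then 1 else 0) + A ^ Suc p * measure \<theta> {C/2<..}
      - (if Ssum n y \<le> A then y i ^ Suc (Suc p) / (real p + 2) else 0)"
proof -
  have C: "0 \<le> C" using A by simp
  have g: "sfl_gen n \<theta> (Ft n i (hA A (Suc p)) C) y - A ^ Suc p * sfl_gen n \<theta> (Ft n i (\<lambda>_. 1) C) y \<le>
    (\<integral>z. ((if 0 \<le> y 1 + z \<and> Ssum n y + z \<le> C then hA A (Suc p) (Psum i y + z) else 0)
         - (if Ssum n y \<le> C then hA A (Suc p) (Psum i y) else 0))
      - A ^ Suc p * ((if 0 \<le> y 1 + z \<and> Ssum n y + z \<le> C then 1 else 0)
         - (if Ssum n y \<le> C then 1 else 0)) \<partial>\<theta>)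
    + (if Ssum n y \<le> C then y i * integral\<^sup>L UU (\<lambda>u. hA A (Suc p) (Psum i y - y i * u) - hA A (Suc p) (Psum i y)) else 0)"
    by (rule gen_diff_bound[OF n2 i y hA_meas _ thp ths]) (rule hA_bounds[OF A(1)])
  show ?thesis
    using g theta_bound[OF thp ths pos i1 e1 ip y i n2 A(1) C] D_bound[OF y i A, of p] by linarith
qed

locale sflc =
  fixes n k :: nat and \<theta> :: "real measure" and \<pi> :: "(nat \<Rightarrow> real) measure"
  assumes n2: "n \<ge> 2"
    and thp: "prob_space \<theta>" and ths: "sets \<theta> = sets borel"
    and pos: "AE z in \<theta>. 0 < z"
    and i1: "integrable \<theta> (\<lambda>z. z)" and e1: "(\<integral>z. z \<partial>\<theta>) = 1"
    and k1: "k \<ge> 1" and ik: "integrable \<theta> (\<lambda>z. z ^ k)"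
    and st: "sfl_stationary n \<theta> \<pi>"
begin

lemma pip: "prob_space \<pi>" using st unfolding sfl_stationary_def by auto
lemma pis: "sets \<pi> = sets (gap_space n)" using st unfolding sfl_stationary_def by auto
lemma pinn: "AE y in \<pi>. nnq n y" using st unfolding sfl_stationary_def nnq_def by auto
lemma pitest: "sfl_test_fun n f \<Longrightarrow> integrable \<pi> (sfl_gen n \<theta> f) \<and> (\<integral>y. sfl_gen n \<theta> f y \<partial>\<pi>) = 0"
  using st unfolding sfl_stationary_def by auto
lemma pimeas: "borel_measurable \<pi> = borel_measurable (gap_space n)"
  by (rule measurable_cong_sets[OF pis refl])
lemma thmeas: "borel_measurable \<theta> = borel_measurable borel"
  by (rule measurable_cong_sets[OF ths refl])

lemma ip: assumes "Suc p \<le> k" shows "integrable \<theta> (\<lambda>z. z ^ Suc p)"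
proof (rule Bochner_Integration.integrable_bound[OF Bochner_Integration.integrable_add[OF i1 ik]])
  show "(\<lambda>z. z ^ Suc p) \<in> borel_measurable \<theta>" unfolding thmeas by measurable
  show "AE z in \<theta>. norm (z ^ Suc p) \<le> norm (z + z ^ k)"
    using pos
  proof eventually_elim
    case (elim z)
    have "z ^ Suc p \<le> z + z ^ k"
    proof (cases "z \<le> 1")
      case True
      have "z ^ p \<le> 1" using elim True by (simp add: power_le_one)
      then have "z * z ^ p \<le> z" using elim by (simp add: mult_left_le)
      moreover have "0 \<le> z ^ k" using elim by simp
      ultimately show ?thesis by simp
    next
      case False
      then have "z ^ Suc p \<le> z ^ k" using assms by (intro power_increasing) auto
      then show ?thesis using elim by linarith
    qed
    then show ?case using elim by simp
  qed
qed


lemma Smeas[measurable]: "Ssum n \<in> borel_measurable \<pi>"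
  unfolding pimeas by (rule meas_Ssum)

lemma a_lim: "(\<lambda>M. measure \<pi> {y \<in> space \<pi>. real M < Ssum n y}) \<longlonglongrightarrow> 0"
proof -
  interpret pi: prob_space \<pi> by (rule pip)
  have "(\<lambda>M. measure \<pi> {y \<in> space \<pi>. real M < Ssum n y}) \<longlonglongrightarrow> measure \<pi> (\<Inter>M. {y \<in> space \<pi>. real M < Ssum n y})"
    by (rule pi.finite_Lim_measure_decseq) (auto simp: decseq_def)
  moreover have "(\<Inter>M. {y \<in> space \<pi>. real M < Ssum n y}) = {}"
  proof -
    have "\<exists>M. \<not> real M < Ssum n y" for y
      using reals_Archimedean2[of "Ssum n y"] by (metis less_asym)
    then show ?thesis by auto
  qed
  ultimately show ?thesis by simp
qed

lemma b_lim: "(\<lambda>M. measure \<theta> {real M<..}) \<longlonglongrightarrow> 0"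
proof -
  interpret th: prob_space \<theta> by (rule thp)
  have "(\<lambda>M. measure \<theta> {real M<..}) \<longlonglongrightarrow> measure \<theta> (\<Inter>M. {real M<..})"
    by (rule th.finite_Lim_measure_decseq) (use ths in \<open>auto simp: decseq_def\<close>)
  moreover have "(\<Inter>M. {real M<..}) = ({} :: real set)"
  proof -
    have "\<exists>M. \<not> real M < x" for x :: real
      using reals_Archimedean2[of x] by (metis less_asym)
    then show ?thesis by auto
  qed
  ultimately show ?thesis by simp
qed

lemma boundN:
  assumes pk: "Suc p \<le> k" and iS: "integrable \<pi> (\<lambda>y. Ssum n y ^ p)" and i: "i \<in> {1..<n}"
  shows "(\<integral>y. (if Ssum n y \<le> real N then y i ^ Suc (Suc p) / (real p + 2) else 0) \<partial>\<pi>)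
     \<le> real (Suc p) * 2 ^ p * ((\<integral>y. Ssum n y ^ p \<partial>\<pi>) + (\<integral>z. z ^ Suc p \<partial>\<theta>))"
proof -
  interpret pi: prob_space \<pi> by (rule pip)
  interpret th: prob_space \<theta> by (rule thp)
  define A where "A = real N"
  define B where "B = A ^ Suc p"
  define K where "K = real (Suc p) * 2 ^ p"
  define EZ where "EZ = (\<integral>z. z ^ Suc p \<partial>\<theta>)"
  define T where "T y = (if Ssum n y \<le> A then y i ^ Suc (Suc p) / (real p + 2) else 0)" for y
  define Q where "Q M = {y \<in> space \<pi>. real M < Ssum n y}" for M
  have A0: "0 \<le> A" unfolding A_def by simp
  have B0: "0 \<le> B" unfolding B_def using A0 by simp
  have yim[measurable]: "(\<lambda>y. y i) \<in> borel_measurable \<pi>" unfolding pimeas by (rule meas_comp[OF i])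
  have mT: "T \<in> borel_measurable \<pi>" unfolding T_def[abs_def] by measurable
  have iT: "integrable \<pi> T"
  proof (rule pi.integrable_const_bound[where B="A ^ Suc (Suc p) / (real p + 2)"])
    show "AE y in \<pi>. norm (T y) \<le> A ^ Suc (Suc p) / (real p + 2)"
      using pinn
    proof eventually_elim
      case (elim y)
      note f = nnq_facts[OF elim i]
      show ?case
      proof (cases "Ssum n y \<le> A")
        case True
        then have "y i ^ Suc (Suc p) \<le> A ^ Suc (Suc p)" using f by (intro power_mono) auto
        then show ?thesis using True f unfolding T_def by (simp add: divide_right_mono)
      next
        case False then show ?thesis using A0 unfolding T_def by simp
      qed
    qed
  qed (rule mT)
  have key: "integral\<^sup>L \<pi> T \<le> K * ((\<integral>y. Ssum n y ^ p \<partial>\<pi>) + EZ) + B * (measure \<pi> (Q M) + measure \<theta> {real M<..})"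
    if M: "N \<le> M" for M
  proof -
    define C where "C = 2 * real M"
    have AC: "A \<le> C" unfolding A_def C_def using M by simp
    have C2: "C / 2 = real M" unfolding C_def by simp
    let ?F = "Ft n i (hA A (Suc p)) C" and ?X = "Ft n i (\<lambda>_. 1) C"
    have tF: "sfl_test_fun n ?F"
    proof (rule Ft_test[OF n2 i hA_meas, where B=B])
      fix x show "\<bar>hA A (Suc p) x\<bar> \<le> B"
        using hA_bounds[OF A0, of "Suc p" x] unfolding B_def by (metis abs_of_nonneg)
    qed
    have tX: "sfl_test_fun n ?X"
      by (rule Ft_test[OF n2 i, where B=1]) auto
    define L where "L y = sfl_gen n \<theta> ?F y - B * sfl_gen n \<theta> ?X y" for y
    have iL: "integrable \<pi> L" unfolding L_def using pitest[OF tF] pitest[OF tX] by simp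
    have IL: "integral\<^sup>L \<pi> L = 0" unfolding L_def using pitest[OF tF] pitest[OF tX] by simp
    define R where "R y = K * (Ssum n y ^ p + EZ) + B * indicator (Q M) y + B * measure \<theta> {real M<..}" for y
    have iQ: "integrable \<pi> (indicator (Q M) :: _ \<Rightarrow> real)"
      unfolding Q_def by (rule pi.integrable_const_bound[where B=1]) auto
    have iR: "integrable \<pi> R" unfolding R_def using iS iQ by simp
    have IR: "integral\<^sup>L \<pi> R = K * ((\<integral>y. Ssum n y ^ p \<partial>\<pi>) + EZ) + B * measure \<pi> (Q M) + B * measure \<theta> {real M<..}"
    proof -
      have "Q M \<in> sets \<pi>" unfolding Q_def by measurable
      then show ?thesis unfolding R_def using iS iQ pi.prob_space by (simp add: algebra_simps)
    qed
    have ptw: "AE y in \<pi>. T y \<le> R y - L y"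
      using pinn AE_space
    proof eventually_elim
      case (elim y)
      have "L y \<le> K * (Ssum n y ^ p + EZ) + B * (if C / 2 < Ssum n y then 1 else 0) + B * measure \<theta> {C/2<..}
          - (if Ssum n y \<le> A then y i ^ Suc (Suc p) / (real p + 2) else 0)"
        unfolding L_def K_def EZ_def B_def
        by (rule final_ptw[OF thp ths pos i1 e1 ip[OF pk] elim(1) i n2 A0 AC])
      moreover have "(if C / 2 < Ssum n y then 1 else 0) = (indicator (Q M) y :: real)"
        unfolding Q_def C2 using elim(2) by (auto simp: indicator_def)
      ultimately show ?case unfolding R_def T_def C2 by simp
    qed
    have "integral\<^sup>L \<pi> T \<le> integral\<^sup>L \<pi> (\<lambda>y. R y - L y)"
      by (rule integral_mono_AE[OF iT _ ptw]) (use iR iL in simp)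
    also have "\<dots> = integral\<^sup>L \<pi> R" using iR iL IL by simp
    finally show ?thesis unfolding IR by (simp add: algebra_simps)
  qed
  have lim: "(\<lambda>M. K * ((\<integral>y. Ssum n y ^ p \<partial>\<pi>) + EZ) + B * (measure \<pi> (Q M) + measure \<theta> {real M<..}))
      \<longlonglongrightarrow> K * ((\<integral>y. Ssum n y ^ p \<partial>\<pi>) + EZ) + B * (0 + 0)"
    unfolding Q_def by (intro tendsto_intros a_lim b_lim)
  have "integral\<^sup>L \<pi> T \<le> K * ((\<integral>y. Ssum n y ^ p \<partial>\<pi>) + EZ) + B * (0 + 0)"
    by (rule LIMSEQ_le_const[OF lim]) (use key in blast)
  then show ?thesis unfolding T_def A_def K_def EZ_def by simp
qed


lemma stepL:
  assumes pk: "Suc p \<le> k" and iS: "integrable \<pi> (\<lambda>y. Ssum n y ^ p)" and i: "i \<in> {1..<n}"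
  shows "integrable \<pi> (\<lambda>y. y i ^ Suc (Suc p))"
proof -
  interpret pi: prob_space \<pi> by (rule pip)
  define f where "f N y = (if Ssum n y \<le> real N then y i ^ Suc (Suc p) / (real p + 2) else 0)" for N y
  define u where "u y = y i ^ Suc (Suc p) / (real p + 2)" for y
  have yim[measurable]: "(\<lambda>y. y i) \<in> borel_measurable \<pi>" unfolding pimeas by (rule meas_comp[OF i])
  have if_: "integrable \<pi> (f N)" for N
  proof (rule pi.integrable_const_bound[where B="real N ^ Suc (Suc p) / (real p + 2)"])
    show "AE y in \<pi>. norm (f N y) \<le> real N ^ Suc (Suc p) / (real p + 2)"
      using pinn
    proof eventually_elim
      case (elim y)
      note fa = nnq_facts[OF elim i]
      show ?case
      proof (cases "Ssum n y \<le> real N")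
        case True
        then have "y i ^ Suc (Suc p) \<le> real N ^ Suc (Suc p)" using fa by (intro power_mono) auto
        then show ?thesis using True fa unfolding f_def by (simp add: divide_right_mono)
      next
        case False then show ?thesis unfolding f_def by simp
      qed
    qed
    show "f N \<in> borel_measurable \<pi>" unfolding f_def[abs_def] by measurable
  qed
  have mono: "AE y in \<pi>. mono (\<lambda>N. f N y)"
    using pinn
  proof eventually_elim
    case (elim y)
    note fa = nnq_facts[OF elim i]
    show ?case
    proof (rule monoI)
      fix N N' :: nat assume "N \<le> N'"
      then have "real N \<le> real N'" by simp
      then show "f N y \<le> f N' y" using fa unfolding f_def by auto
    qed
  qed
  have pos: "AE y in \<pi>. 0 \<le> f N y" for N
    using pinn
  proof eventually_elim
    case (elim y)
    then show ?case using nnq_facts[OF elim i] unfolding f_def by auto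
  qed
  have lim: "AE y in \<pi>. (\<lambda>N. f N y) \<longlonglongrightarrow> u y"
  proof (rule AE_I2)
    fix y
    show "(\<lambda>N. f N y) \<longlonglongrightarrow> u y"
    proof (rule tendsto_eventually)
      obtain N0 where "Ssum n y < real N0" using reals_Archimedean2 by blast
      then have "\<forall>N\<ge>N0. f N y = u y" unfolding f_def u_def
        by (smt (verit, ccfv_SIG) of_nat_mono)
      then show "\<forall>\<^sub>F N in sequentially. f N y = u y" unfolding eventually_sequentially by blast
    qed
  qed
  have inc: "incseq (\<lambda>N. integral\<^sup>L \<pi> (f N))"
  proof (rule incseq_SucI)
    fix N
    show "integral\<^sup>L \<pi> (f N) \<le> integral\<^sup>L \<pi> (f (Suc N))"
    proof (rule integral_mono_AE[OF if_ if_])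
      show "AE y in \<pi>. f N y \<le> f (Suc N) y" using mono
        by eventually_elim (simp add: mono_def)
    qed
  qed
  obtain Lm where Lm: "(\<lambda>N. integral\<^sup>L \<pi> (f N)) \<longlonglongrightarrow> Lm"
    using incseq_convergent[OF inc, of "real (Suc p) * 2 ^ p * ((\<integral>y. Ssum n y ^ p \<partial>\<pi>) + (\<integral>z. z ^ Suc p \<partial>\<theta>))"]
      boundN[OF pk iS i] unfolding f_def by blast
  have mu: "u \<in> borel_measurable \<pi>" unfolding u_def[abs_def] by measurable
  have iu: "integrable \<pi> u"
    by (rule integral_monotone_convergence_nonneg(1)[OF if_ mono pos lim Lm mu])
  have "integrable \<pi> (\<lambda>y. (real p + 2) * u y)" using iu by simp
  moreover have "(\<lambda>y. (real p + 2) * u y) = (\<lambda>y. y i ^ Suc (Suc p))"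
    unfolding u_def by (auto simp: field_simps)
  ultimately show ?thesis by simp
qed

lemma mom_mono:
  assumes "integrable \<pi> (\<lambda>y. Ssum n y ^ q)" "p \<le> q"
  shows "integrable \<pi> (\<lambda>y. Ssum n y ^ p)"
proof -
  interpret pi: prob_space \<pi> by (rule pip)
  show ?thesis
  proof (rule Bochner_Integration.integrable_bound[OF Bochner_Integration.integrable_add[OF pi.integrable_const[of 1] assms(1)]])
    show "(\<lambda>y. Ssum n y ^ p) \<in> borel_measurable \<pi>" by measurable
    show "AE y in \<pi>. norm (Ssum n y ^ p) \<le> norm (1 + Ssum n y ^ q)"
      using pinn
    proof eventually_elim
      case (elim y)
      have S0: "0 \<le> Ssum n y" using nnq_facts[OF elim, of 1] n2 by auto
      have "Ssum n y ^ p \<le> 1 + Ssum n y ^ q"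
      proof (cases "Ssum n y \<le> 1")
        case True
        then have "Ssum n y ^ p \<le> 1" using S0 by (simp add: power_le_one)
        then show ?thesis using S0 by (smt (verit) zero_le_power)
      next
        case False
        then have "Ssum n y ^ p \<le> Ssum n y ^ q" using assms(2) by (intro power_increasing) auto
        then show ?thesis by simp
      qed
      then show ?case using S0 by simp
    qed
  qed
qed

lemma sum_pow_le:
  fixes a :: "nat \<Rightarrow> real"
  assumes "finite J" "\<And>j. j \<in> J \<Longrightarrow> 0 \<le> a j" "1 \<le> m"
  shows "(\<Sum>j\<in>J. a j) ^ m \<le> 2 ^ (m * card J) * (\<Sum>j\<in>J. a j ^ m)"
  using assms
proof (induction J rule: finite_induct)
  case empty then show ?case by (cases m) auto
next
  case (insert x F)
  have s0: "0 \<le> (\<Sum>j\<in>F. a j)" using insert by (intro sum_nonneg) auto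
  have s1: "0 \<le> (\<Sum>j\<in>F. a j ^ m)" using insert by (intro sum_nonneg) auto
  have ax: "0 \<le> a x" using insert by auto
  have IH: "(\<Sum>j\<in>F. a j) ^ m \<le> 2 ^ (m * card F) * (\<Sum>j\<in>F. a j ^ m)" using insert by auto
  have one: "(1::real) \<le> 2 ^ (m * card F)" by simp
  have "(\<Sum>j\<in>insert x F. a j) ^ m = (a x + (\<Sum>j\<in>F. a j)) ^ m" using insert by simp
  also have "\<dots> \<le> 2 ^ m * (a x ^ m + (\<Sum>j\<in>F. a j) ^ m)" by (rule pow_split[OF ax s0])
  also have "\<dots> \<le> 2 ^ m * (2 ^ (m * card F) * a x ^ m + 2 ^ (m * card F) * (\<Sum>j\<in>F. a j ^ m))"
  proof -
    have t1: "a x ^ m \<le> 2 ^ (m * card F) * a x ^ m"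
      using mult_right_mono[OF one, of "a x ^ m"] ax by simp
    show ?thesis by (intro mult_left_mono add_mono t1 IH) simp
  qed
  also have "\<dots> = 2 ^ (m * card (insert x F)) * (\<Sum>j\<in>insert x F. a j ^ m)"
    using insert by (simp add: power_add algebra_simps)
  finally show ?case .
qed

lemma sum_int:
  assumes "\<And>i. i \<in> {1..<n} \<Longrightarrow> integrable \<pi> (\<lambda>y. y i ^ m)" "1 \<le> m"
  shows "integrable \<pi> (\<lambda>y. Ssum n y ^ m)"
proof -
  have is_: "integrable \<pi> (\<lambda>y. 2 ^ (m * card {1..<n}) * (\<Sum>j\<in>{1..<n}. y j ^ m))"
    using assms(1) by (intro integrable_mult_right Bochner_Integration.integrable_sum) auto
  show ?thesis
  proof (rule Bochner_Integration.integrable_bound[OF is_])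
    show "(\<lambda>y. Ssum n y ^ m) \<in> borel_measurable \<pi>" by measurable
    show "AE y in \<pi>. norm (Ssum n y ^ m) \<le> norm (2 ^ (m * card {1..<n}) * (\<Sum>j\<in>{1..<n}. y j ^ m))"
      using pinn
    proof eventually_elim
      case (elim y)
      have nn: "\<And>j. j \<in> {1..<n} \<Longrightarrow> 0 \<le> y j" using elim unfolding nnq_def by auto
      have S0: "0 \<le> Ssum n y" unfolding Ssum_def using nn by (intro sum_nonneg) auto
      have "0 \<le> (\<Sum>j\<in>{1..<n}. y j ^ m)" using nn by (intro sum_nonneg) auto
      then show ?case using sum_pow_le[of "{1..<n}" y m] nn assms(2) S0
        unfolding Ssum_def by simp
    qed
  qed
qed

lemma Pm: "1 \<le> m \<Longrightarrow> m \<le> k \<Longrightarrow> integrable \<pi> (\<lambda>y. Ssum n y ^ Suc m)"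
proof (induction m)
  case 0 then show ?case by simp
next
  case (Suc m)
  interpret pi: prob_space \<pi> by (rule pip)
  have iS: "integrable \<pi> (\<lambda>y. Ssum n y ^ m)"
  proof (cases "m = 0")
    case True then show ?thesis by simp
  next
    case False
    then have "integrable \<pi> (\<lambda>y. Ssum n y ^ Suc m)" using Suc by simp
    then show ?thesis by (rule mom_mono) simp
  qed
  have all: "\<And>i. i \<in> {1..<n} \<Longrightarrow> integrable \<pi> (\<lambda>y. y i ^ Suc (Suc m))"
    by (rule stepL[OF Suc.prems(2) iS])
  have h1: "1 \<le> Suc (Suc m)" by simp
  show ?case by (rule sum_int[OF all h1])
qed

lemma main: "\<forall>i\<in>{1..<n}. integrable \<pi> (\<lambda>y. y i ^ (k + 1))"
proof
  fix i assume i: "i \<in> {1..<n}"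
  have iS: "integrable \<pi> (\<lambda>y. Ssum n y ^ Suc k)" by (rule Pm[OF k1 order_refl])
  show "integrable \<pi> (\<lambda>y. y i ^ (k + 1))"
  proof (rule Bochner_Integration.integrable_bound[OF iS])
    show "(\<lambda>y. y i ^ (k + 1)) \<in> borel_measurable \<pi>"
      using meas_comp[OF i] unfolding pimeas[symmetric] by measurable
    show "AE y in \<pi>. norm (y i ^ (k + 1)) \<le> norm (Ssum n y ^ Suc k)"
      using pinn
    proof eventually_elim
      case (elim y)
      note fa = nnq_facts[OF elim i]
      have "y i ^ Suc k \<le> Ssum n y ^ Suc k" using fa by (intro power_mono) auto
      then show ?case using fa by simp
    qed
  qed
qed

end

theorem theorem3p6:
  fixes n k :: nat and \<theta> :: "real measure" and \<pi> :: "(nat \<Rightarrow> real) measure"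
  assumes "n \<ge> 2"
    and "prob_space \<theta>" and "sets \<theta> = sets borel"
    and "AE z in \<theta>. 0 < z"
    and "integrable \<theta> (\<lambda>z. z)" and "(\<integral>z. z \<partial>\<theta>) = 1"
    and "k \<ge> 1" and "integrable \<theta> (\<lambda>z. z ^ k)"
    and "sfl_stationary n \<theta> \<pi>"
  shows "\<forall>i\<in>{1..<n}. integrable \<pi> (\<lambda>y. y i ^ (k + 1))"
proof -
  interpret sflc n k \<theta> \<pi> by (rule sflc.intro[OF assms])
  show ?thesis by (rule main)
qed

end
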